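(* Fix $F\in\mathcal S^\sharp$ with its $\gamma$, and let $C>0$. Let $t<0$ with $|t|\le C$, $s=x+iy$ with $y>0$ and $|x|\le Cy^{1/4}$, and let $n$ be an integer with $1\le n\le\exp(y^{3/5}/|t|)$. Put $\mathcal I(z):=\gamma(z)e^{\frac{1}{|t|}(J_t(s)-z)^2}n^{-z}$. There exist $y_0,K>0$ depending only on $C,F,\gamma$ such that for all such $t,s,n$ with $y\ge y_0$: (i) if $|x-\Re z|\le y^{3/5}$ and $\tfrac12y^{2/3}\le|y-\Im z|\le2y^{2/3}$, then $|\mathcal I(z)|\le K\exp\!\left(-\frac{y^{4/3}}{10|t|}\right)$; (ii) if $\Re z=2$ and $|y-\Im z|\ge y^{2/3}$, then $|\mathcal I(z)|\le K\exp\!\left(-\frac{1}{2|t|}(y-\Im z)^2\right)$.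
   Context: $\operatorname{Log}$ denotes the principal branch of the logarithm. The extended Selberg class $\mathcal S^\sharp$ is the set of functions $F$, not identically zero, such that: (i) $F(s)=\sum_{n\ge1}a_n n^{-s}$, with the series converging absolutely for $\Re s>1$; (ii) $(s-1)^mF(s)$ extends to an entire function of finite order for some integer $m\ge0$; (iii) letting $m$ be the order of the pole of $F$ at $s=1$ ($m=0$ if there is no pole), there is a function $\gamma(s)=\alpha s^m(s-1)^mQ^s\prod_{i=1}^k\Gamma(\omega_i s+\mu_i)$ with $\alpha\in\mathbb C\setminus\{0\}$, $Q>0$, an integer $k\ge1$, $\omega_i>0$ and $\mu_i\in\mathbb C$ with $\Re\mu_i\ge0$, such that the (entire) function $\xi^F(s):=\gamma(s)F(s)$ satisfies $\xi^F(s)=\overline{\xi^F(1-\bar s)}$ for all $s$. For $t<0$ and $\Im s>0$: $J_t(s):=s+\frac{|t|}{2}\log Q+\frac{|t|}{2}\sum_{i=1}^k\omega_i\operatorname{Log}(\omega_i s)$. *)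

theory Defs
  imports "HOL-Analysis.Analysis"
begin

definition gamma_factor ::
  "complex \<Rightarrow> nat \<Rightarrow> real \<Rightarrow> nat \<Rightarrow> (nat \<Rightarrow> real) \<Rightarrow> (nat \<Rightarrow> complex) \<Rightarrow> complex \<Rightarrow> complex"
  where "gamma_factor \<alpha> m Q k \<omega> \<mu> s =
     \<alpha> * s ^ m * (s - 1) ^ m * (complex_of_real Q) powr s *
     (\<Prod>i<k. Gamma (complex_of_real (\<omega> i) * s + \<mu> i))"

definition gamma_pole :: "nat \<Rightarrow> (nat \<Rightarrow> real) \<Rightarrow> (nat \<Rightarrow> complex) \<Rightarrow> complex \<Rightarrow> bool"
  where "gamma_pole k \<omega> \<mu> s \<longleftrightarrow>
     (\<exists>i<k. complex_of_real (\<omega> i) * s + \<mu> i \<in> \<int>\<^sub>\<le>\<^sub>0)"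

definition finite_order_entire :: "(complex \<Rightarrow> complex) \<Rightarrow> bool"
  where "finite_order_entire G \<longleftrightarrow> G holomorphic_on UNIV \<and>
     (\<exists>\<rho> R. \<forall>z. norm z \<ge> R \<longrightarrow> norm (G z) \<le> exp (norm z powr \<rho>))"

text \<open>F belongs to the extended Selberg class, with Dirichlet coefficients a (a (Suc n') is a_n
  for n = n'+1), pole order m at s = 1, and gamma factor given by (alpha, Q, k, omega, mu).
  The value of F at the point s = 1 is irrelevant.\<close>
definition selberg_sharp ::
  "(complex \<Rightarrow> complex) \<Rightarrow> (nat \<Rightarrow> complex) \<Rightarrow> nat \<Rightarrow> complex \<Rightarrow> real \<Rightarrow> nat \<Rightarrow>
   (nat \<Rightarrow> real) \<Rightarrow> (nat \<Rightarrow> complex) \<Rightarrow> bool"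
  where "selberg_sharp F a m \<alpha> Q k \<omega> \<mu> \<longleftrightarrow>
     (\<exists>s. s \<noteq> 1 \<and> F s \<noteq> 0) \<and>
     (\<forall>s. 1 < Re s \<longrightarrow>
         summable (\<lambda>n. norm (a (Suc n) / of_nat (Suc n) powr s)) \<and>
         F s = (\<Sum>n. a (Suc n) / of_nat (Suc n) powr s)) \<and>
     (\<exists>G. finite_order_entire G \<and> (\<forall>s. s \<noteq> 1 \<longrightarrow> G s = (s - 1) ^ m * F s) \<and>
          (m = 0 \<or> G 1 \<noteq> 0)) \<and>
     \<alpha> \<noteq> 0 \<and> Q > 0 \<and> k \<ge> 1 \<and> (\<forall>i<k. \<omega> i > 0 \<and> Re (\<mu> i) \<ge> 0) \<and>
     (\<exists>\<xi>. \<xi> holomorphic_on UNIV \<and>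
          (\<forall>s. s \<noteq> 1 \<and> \<not> gamma_pole k \<omega> \<mu> s \<longrightarrow> \<xi> s = gamma_factor \<alpha> m Q k \<omega> \<mu> s * F s) \<and>
          (\<forall>s. \<xi> s = cnj (\<xi> (1 - cnj s))))"

definition J_fun :: "real \<Rightarrow> nat \<Rightarrow> (nat \<Rightarrow> real) \<Rightarrow> real \<Rightarrow> complex \<Rightarrow> complex"
  where "J_fun Q k \<omega> t s = s + of_real (\<bar>t\<bar> / 2 * ln Q) +
     of_real (\<bar>t\<bar> / 2) * (\<Sum>i<k. of_real (\<omega> i) * Ln (of_real (\<omega> i) * s))"

definition integrand ::
  "complex \<Rightarrow> nat \<Rightarrow> real \<Rightarrow> nat \<Rightarrow> (nat \<Rightarrow> real) \<Rightarrow> (nat \<Rightarrow> complex) \<Rightarrow>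
   real \<Rightarrow> complex \<Rightarrow> nat \<Rightarrow> complex \<Rightarrow> complex"
  where "integrand \<alpha> m Q k \<omega> \<mu> t s n z =
     gamma_factor \<alpha> m Q k \<omega> \<mu> z * exp ((J_fun Q k \<omega> t s - z)\<^sup>2 / of_real \<bar>t\<bar>) *
     (of_nat n) powr (- z)"

end

theory Submission
  imports Defs "HOL-Complex_Analysis.Complex_Analysis" "HOL-Real_Asymp.Real_Asymp"
begin


lemma Gamma_norm_le_Re:
  fixes w :: complex assumes "Re w > 0"
  shows "norm (Gamma w) \<le> Gamma (Re w)"
proof -
  have 1: "((\<lambda>t. of_real t powr (w - 1) / of_real (exp t)) has_integral Gamma w) {0..}"
    using Gamma_integral_complex assms by blast
  have 2: "((\<lambda>t. t powr (Re w - 1) / exp t) has_integral Gamma (Re w)) {0..}"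
    using Gamma_integral_real assms by blast
  have "norm (Gamma w) \<le> Gamma (Re w) \<bullet> 1"
  proof (rule has_integral_norm_bound_integral_component[OF 1 2])
    fix t :: real assume "t \<in> {0..}"
    then have "t \<ge> 0" by simp
    then show "norm (of_real t powr (w - 1) / of_real (exp t)) \<le> (t powr (Re w - 1) / exp t) \<bullet> 1"
      by (simp add: norm_divide norm_powr_real_powr)
  qed
  then show ?thesis by simp
qed

lemma not_nonpos_Int_if_Im: "Im (w::complex) \<noteq> 0 \<Longrightarrow> w \<notin> \<int>\<^sub>\<le>\<^sub>0"
  by (auto elim!: nonpos_Ints_cases)

lemma Gamma_bound_aux:
  obtains B :: real where "B \<ge> 1"
    "\<And>w::complex. 1 \<le> \<bar>Im w\<bar> \<Longrightarrow> norm (Gamma w) \<le> B * (1 + norm w) ^ nat \<lceil>Re w\<rceil>"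
proof -
  have "continuous_on {1..2::real} Gamma"
    by (rule continuous_on_Gamma) (auto elim!: nonpos_Ints_cases)
  then have "bounded (Gamma ` {1..2::real})"
    by (intro compact_imp_bounded compact_continuous_image) auto
  then obtain b where b: "b > 0" "\<And>x::real. x \<in> {1..2} \<Longrightarrow> norm (Gamma x) \<le> b"
    by (auto simp: bounded_pos)
  define B where "B = max b 1"
  have B1: "B \<ge> 1" by (simp add: B_def)
  have down: "\<forall>w::complex. 1 \<le> \<bar>Im w\<bar> \<longrightarrow> 1 - real M \<le> Re w \<longrightarrow> Re w \<le> 2 \<longrightarrow> norm (Gamma w) \<le> B" for M :: nat
  proof (induction M)
    case 0
    show ?case
    proof (intro allI impI)
      fix w :: complex assume "1 \<le> \<bar>Im w\<bar>" "1 - real 0 \<le> Re w" "Re w \<le> 2"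
      then have "norm (Gamma w) \<le> Gamma (Re w)" by (intro Gamma_norm_le_Re) auto
      also have "\<dots> \<le> b" using b(2)[of "Re w"] \<open>1 - real 0 \<le> Re w\<close> \<open>Re w \<le> 2\<close> by auto
      finally show "norm (Gamma w) \<le> B" by (simp add: B_def)
    qed
  next
    case (Suc M)
    show ?case
    proof (intro allI impI)
      fix w :: complex assume h: "1 \<le> \<bar>Im w\<bar>" "1 - real (Suc M) \<le> Re w" "Re w \<le> 2"
      show "norm (Gamma w) \<le> B"
      proof (cases "1 - real M \<le> Re w")
        case True then show ?thesis using Suc h by blast
      next
        case False
        have i1: "1 \<le> \<bar>Im (w + 1)\<bar>" using h(1) by simp
        have r1: "1 - real M \<le> Re (w + 1)" "Re (w + 1) \<le> 2" using h(2) False by auto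
        have IH: "norm (Gamma (w + 1)) \<le> B" using Suc.IH i1 r1 by blast
        have ni: "w \<notin> \<int>\<^sub>\<le>\<^sub>0" using h(1) by (intro not_nonpos_Int_if_Im) auto
        have eq: "Gamma (w + 1) = w * Gamma w" by (rule Gamma_plus1[OF ni])
        have nw: "norm w \<ge> 1" using h(1) abs_Im_le_cmod order_trans by blast
        have "norm (Gamma w) \<le> norm w * norm (Gamma w)" using nw
          by (simp add: mult_le_cancel_right1)
        also have "\<dots> = norm (Gamma (w+1))" by (simp add: eq norm_mult)
        finally show ?thesis using IH by linarith
      qed
    qed
  qed
  have up: "\<forall>w::complex. 1 \<le> \<bar>Im w\<bar> \<longrightarrow> Re w \<le> 2 + real N \<longrightarrow> norm (Gamma w) \<le> B * (1 + norm w) ^ N" for N :: nat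
  proof (induction N)
    case 0
    show ?case
    proof (intro allI impI)
      fix w :: complex assume h: "1 \<le> \<bar>Im w\<bar>" "Re w \<le> 2 + real 0"
      define M where "M = nat \<lceil>1 - Re w\<rceil>"
      have m1: "1 - real M \<le> Re w" unfolding M_def by linarith
      have r2: "Re w \<le> 2" using h(2) by simp
      have "norm (Gamma w) \<le> B" using down[of M, rule_format, OF h(1) m1 r2] .
      then show "norm (Gamma w) \<le> B * (1 + norm w) ^ 0" by simp
    qed
  next
    case (Suc N)
    show ?case
    proof (intro allI impI)
      fix w :: complex assume h: "1 \<le> \<bar>Im w\<bar>" "Re w \<le> 2 + real (Suc N)"
      have pos: "1 + norm w \<ge> 1" by simp
      show "norm (Gamma w) \<le> B * (1 + norm w) ^ Suc N"
      proof (cases "Re w \<le> 2 + real N")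
        case True
        then have "norm (Gamma w) \<le> B * (1 + norm w) ^ N" using Suc.IH h(1) by blast
        also have "\<dots> \<le> B * (1 + norm w) ^ Suc N"
        proof (rule mult_left_mono)
          show "(1 + norm w) ^ N \<le> (1 + norm w) ^ Suc N" by (rule power_increasing) (use pos in auto)
        qed (use B1 in simp)
        finally show ?thesis .
      next
        case False
        have Im1: "Im (w - 1) = Im w" by simp
        have r1: "Re (w - 1) \<le> 2 + real N" using h(2) by simp
        have i1: "1 \<le> \<bar>Im (w - 1)\<bar>" using h(1) by simp
        have IH: "norm (Gamma (w - 1)) \<le> B * (1 + norm (w - 1)) ^ N"
          using Suc.IH i1 r1 by blast
        have ni: "w - 1 \<notin> \<int>\<^sub>\<le>\<^sub>0" using h(1) by (intro not_nonpos_Int_if_Im) auto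
        have "Gamma (w - 1 + 1) = (w - 1) * Gamma (w - 1)" by (rule Gamma_plus1[OF ni])
        then have eq: "Gamma w = (w - 1) * Gamma (w - 1)" by simp
        have e1: "(norm (w - 1))^2 = (Re w - 1)^2 + (Im w)^2" by (simp add: cmod_power2)
        have e2: "(norm w)^2 = (Re w)^2 + (Im w)^2" by (simp add: cmod_power2)
        have "(Re w - 1)^2 = (Re w)^2 - 2 * Re w + 1" by (simp add: power2_eq_square algebra_simps)
        then have "(Re w - 1)^2 \<le> (Re w)^2" using False by linarith
        then have "(norm (w - 1))^2 \<le> (norm w)^2" using e1 e2 by linarith
        then have nle: "norm (w - 1) \<le> norm w" by (rule power2_le_imp_le) simp
        have "norm (Gamma w) = norm (w - 1) * norm (Gamma (w - 1))" by (simp add: eq norm_mult)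
        also have "\<dots> \<le> (1 + norm w) * (B * (1 + norm w) ^ N)"
        proof (rule mult_mono)
          have "(1 + norm (w - 1)) ^ N \<le> (1 + norm w) ^ N" using nle by (intro power_mono) auto
          then have "B * (1 + norm (w - 1)) ^ N \<le> B * (1 + norm w) ^ N"
            by (rule mult_left_mono) (use B1 in simp)
          then show "norm (Gamma (w - 1)) \<le> B * (1 + norm w) ^ N"
            using IH by linarith
        qed (use nle in auto)
        also have "\<dots> = B * (1 + norm w) ^ Suc N" by simp
        finally show ?thesis .
      qed
    qed
  qed
  show ?thesis
  proof (rule that[OF B1])
    fix w :: complex assume "1 \<le> \<bar>Im w\<bar>"
    moreover have "Re w \<le> 2 + real (nat \<lceil>Re w\<rceil>)" by linarith
    ultimately show "norm (Gamma w) \<le> B * (1 + norm w) ^ nat \<lceil>Re w\<rceil>" using up by blast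
  qed
qed

lemma asymp_facts:
  fixes C W wm M lQ a1 a2 b :: real and m k :: nat
  assumes "C > 0" "W > 0" "wm > 0" "M \<ge> 0" "lQ \<ge> 0"
  shows "eventually (\<lambda>y::real. 1 \<le> y \<and> 1 \<le> wm * y \<and>
     4 * (C * y powr (1/4) + 2)^2 \<le> y powr (4/3) \<and>
     8 * C * (2 * m + (lQ + W * (ln (W * (C * y powr (1/4) + y)) + pi))) \<le> y powr (2/3) \<and>
     a2 + 2 * m * (3 + y) + (C * y powr (1/4) + 2) * (lQ + W * (ln (W * (C * y powr (1/4) + y)) + pi))
       + C * (lQ + W * (ln (W * (C * y powr (1/4) + y)) + pi))^2 / 4 \<le> y powr (4/3) / (8 * C) \<and>
     y powr (6/5) + (C * y powr (1/4) + y powr (3/5)) * y powr (3/5) + 3/20 * y powr (4/3)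
       \<le> y powr (4/3) / 4 \<and>
     1 \<le> wm * (y - 2 * y powr (2/3)) - M \<and>
     a1 + 2 * m * ln (C * y powr (1/4) + y powr (3/5) + y + 2 * y powr (2/3) + 1)
       + lQ * (C * y powr (1/4) + y powr (3/5))
       + k * b + k * ((W * (C * y powr (1/4) + y powr (3/5)) + M + 1) *
            ln (1 + W * (C * y powr (1/4) + y powr (3/5) + y + 2 * y powr (2/3)) + M))
       + (y powr (3/5) + 2 * y powr (2/3)) * (lQ + W * (ln (W * (C * y powr (1/4) + y)) + pi))
       + C * (lQ + W * (ln (W * (C * y powr (1/4) + y)) + pi))^2 / 4 \<le> y powr (4/3) / (20 * C)) at_top"
proof -
  have 1: "eventually (\<lambda>y::real. 1 \<le> y) at_top" by real_asymp
  have 2: "eventually (\<lambda>y::real. 1 \<le> wm * y) at_top" using assms by real_asymp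
  have 3: "eventually (\<lambda>y::real. 4 * (C * y powr (1/4) + 2)^2 \<le> y powr (4/3)) at_top" using assms by real_asymp
  have 4: "eventually (\<lambda>y::real. 8 * C * (2 * m + (lQ + W * (ln (W * (C * y powr (1/4) + y)) + pi))) \<le> y powr (2/3)) at_top"
    using assms by real_asymp
  have 5: "eventually (\<lambda>y::real. a2 + 2 * m * (3 + y) + (C * y powr (1/4) + 2) * (lQ + W * (ln (W * (C * y powr (1/4) + y)) + pi))
       + C * (lQ + W * (ln (W * (C * y powr (1/4) + y)) + pi))^2 / 4 \<le> y powr (4/3) / (8 * C)) at_top"
    using assms by real_asymp
  have 6: "eventually (\<lambda>y::real. y powr (6/5) + (C * y powr (1/4) + y powr (3/5)) * y powr (3/5) + 3/20 * y powr (4/3)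
       \<le> y powr (4/3) / 4) at_top" using assms by real_asymp
  have 7: "eventually (\<lambda>y::real. 1 \<le> wm * (y - 2 * y powr (2/3)) - M) at_top" using assms by real_asymp
  have 8: "eventually (\<lambda>y::real. a1 + 2 * m * ln (C * y powr (1/4) + y powr (3/5) + y + 2 * y powr (2/3) + 1)
       + lQ * (C * y powr (1/4) + y powr (3/5))
       + k * b + k * ((W * (C * y powr (1/4) + y powr (3/5)) + M + 1) *
            ln (1 + W * (C * y powr (1/4) + y powr (3/5) + y + 2 * y powr (2/3)) + M))
       + (y powr (3/5) + 2 * y powr (2/3)) * (lQ + W * (ln (W * (C * y powr (1/4) + y)) + pi))
       + C * (lQ + W * (ln (W * (C * y powr (1/4) + y)) + pi))^2 / 4 \<le> y powr (4/3) / (20 * C)) at_top"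
    using assms by real_asymp
  show ?thesis using 1 2 3 4 5 6 7 8
    apply eventually_elim
    apply (intro conjI)
           apply assumption+
    done
qed


lemma L_bound:
  fixes s :: complex and \<omega> :: "nat \<Rightarrow> real"
  assumes Q: "Q > 0" and om: "\<forall>i<k. \<omega> i > 0" and wm: "\<forall>i<k. wm \<le> \<omega> i"
    and y1: "1 \<le> wm * Im s" and ypos: "Im s > 0" and xb: "\<bar>Re s\<bar> \<le> C * Im s powr (1/4)"
  shows "norm (of_real (ln Q) + (\<Sum>i<k. of_real (\<omega> i) * Ln (of_real (\<omega> i) * s)))
     \<le> \<bar>ln Q\<bar> + (\<Sum>i<k. \<omega> i) * (ln ((\<Sum>i<k. \<omega> i) * (C * Im s powr (1/4) + Im s)) + pi)"
proof -
  define W where "W = (\<Sum>i<k. \<omega> i)"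
  define y where "y = Im s"
  have per: "norm (of_real (\<omega> i) * Ln (of_real (\<omega> i) * s)) \<le> \<omega> i * (ln (W * (C * y powr (1/4) + y)) + pi)"
    if i: "i < k" for i
  proof -
    have wi: "\<omega> i > 0" using om i by auto
    define v where "v = of_real (\<omega> i) * s"
    have nv: "norm v = \<omega> i * norm s" using wi by (simp add: v_def norm_mult)
    have "y \<le> norm s" unfolding y_def using abs_Im_le_cmod[of s] ypos by linarith
    then have "\<omega> i * y \<le> norm v" using nv wi by simp
    moreover have "wm * y \<le> \<omega> i * y" using wm i ypos unfolding y_def by (simp add: mult_right_mono)
    ultimately have v1: "1 \<le> norm v" using y1 unfolding y_def by linarith
    then have v0: "v \<noteq> 0" by auto
    have "norm s \<le> \<bar>Re s\<bar> + \<bar>Im s\<bar>" by (rule cmod_le)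
    then have ns: "norm s \<le> C * y powr (1/4) + y" using xb ypos unfolding y_def by auto
    have wiW: "\<omega> i \<le> W" unfolding W_def
      using i om by (intro member_le_sum) auto
    have "norm v \<le> W * (C * y powr (1/4) + y)"
      unfolding nv using wiW ns wi
      by (meson mult_mono less_imp_le norm_ge_zero order_trans)
    then have lnv: "ln (norm v) \<le> ln (W * (C * y powr (1/4) + y))"
      using v1 by (subst ln_le_cancel_iff) auto
    have lnv0: "0 \<le> ln (norm v)" using v1 by simp
    have "norm (Ln v) \<le> \<bar>Re (Ln v)\<bar> + \<bar>Im (Ln v)\<bar>" by (rule cmod_le)
    also have "\<bar>Re (Ln v)\<bar> = ln (norm v)" using v0 lnv0 by (simp add: Re_Ln)
    also have "\<bar>Im (Ln v)\<bar> \<le> pi" using mpi_less_Im_Ln[of v] Im_Ln_le_pi[of v] v0 by auto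
    finally have "norm (Ln v) \<le> ln (W * (C * y powr (1/4) + y)) + pi" using lnv by linarith
    then show ?thesis using wi unfolding v_def[symmetric] by (simp add: norm_mult mult_left_mono)
  qed
  have "norm (of_real (ln Q) + (\<Sum>i<k. of_real (\<omega> i) * Ln (of_real (\<omega> i) * s)))
      \<le> norm (of_real (ln Q) :: complex) + norm (\<Sum>i<k. of_real (\<omega> i) * Ln (of_real (\<omega> i) * s))"
    by (rule norm_triangle_ineq)
  also have "norm (\<Sum>i<k. of_real (\<omega> i) * Ln (of_real (\<omega> i) * s)) \<le> (\<Sum>i<k. norm (of_real (\<omega> i) * Ln (of_real (\<omega> i) * s)))"
    by (rule norm_sum)
  also have "\<dots> \<le> (\<Sum>i<k. \<omega> i * (ln (W * (C * y powr (1/4) + y)) + pi))"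
    by (intro sum_mono per) auto
  also have "\<dots> = W * (ln (W * (C * y powr (1/4) + y)) + pi)"
    unfolding W_def by (simp add: sum_distrib_right)
  finally show ?thesis unfolding W_def y_def by simp
qed

lemma exp_bound:
  assumes t: "t < 0" and L: "L = of_real (ln Q) + (\<Sum>i<k. of_real (\<omega> i) * Ln (of_real (\<omega> i) * s))"
    and Lb: "norm L \<le> Lb"
  shows "norm (exp ((J_fun Q k \<omega> t s - z)\<^sup>2 / of_real \<bar>t\<bar>))
     \<le> exp (((Re s - Re z)\<^sup>2 - (Im s - Im z)\<^sup>2) / \<bar>t\<bar> + norm (s - z) * Lb + \<bar>t\<bar> * Lb\<^sup>2 / 4)"
proof -
  define \<tau> where "\<tau> = \<bar>t\<bar>"
  have tau: "\<tau> > 0" using t by (simp add: \<tau>_def)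
  define D where "D = s - z"
  have J: "J_fun Q k \<omega> t s - z = D + of_real (\<tau> / 2) * L"
    unfolding J_fun_def L D_def \<tau>_def by (simp add: algebra_simps)
  have sq: "(D + of_real (\<tau> / 2) * L)\<^sup>2 / of_real \<tau> = D\<^sup>2 / of_real \<tau> + D * L + of_real (\<tau> / 4) * L\<^sup>2"
    using tau by (simp add: field_simps power2_eq_square)
  have r1: "Re (D\<^sup>2 / of_real \<tau>) = ((Re s - Re z)\<^sup>2 - (Im s - Im z)\<^sup>2) / \<tau>"
    by (simp add: Re_divide_of_real Re_power2 D_def)
  have r2: "Re (D * L) \<le> norm D * Lb"
  proof -
    have "Re (D * L) \<le> norm (D * L)" by (rule complex_Re_le_cmod)
    also have "\<dots> \<le> norm D * Lb" using Lb by (simp add: norm_mult mult_left_mono)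
    finally show ?thesis .
  qed
  have r3: "Re (of_real (\<tau> / 4) * L\<^sup>2) \<le> \<tau> * Lb\<^sup>2 / 4"
  proof -
    have "Re (L\<^sup>2) \<le> norm (L\<^sup>2)" by (rule complex_Re_le_cmod)
    also have "\<dots> = (norm L)\<^sup>2" by (simp add: norm_power)
    also have "\<dots> \<le> Lb\<^sup>2" using Lb by (intro power_mono) auto
    finally have "Re (L\<^sup>2) \<le> Lb\<^sup>2" .
    then show ?thesis using tau by (simp add: Re_complex_of_real)
  qed
  have "Re ((J_fun Q k \<omega> t s - z)\<^sup>2 / of_real \<tau>) = Re (D\<^sup>2 / of_real \<tau>) + Re (D * L) + Re (of_real (\<tau> / 4) * L\<^sup>2)"
    by (metis J sq plus_complex.sel(1))
  then have "Re ((J_fun Q k \<omega> t s - z)\<^sup>2 / of_real \<tau>)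
      \<le> ((Re s - Re z)\<^sup>2 - (Im s - Im z)\<^sup>2) / \<tau> + norm D * Lb + \<tau> * Lb\<^sup>2 / 4"
    using r1 r2 r3 by linarith
  then show ?thesis unfolding \<tau>_def[symmetric] D_def[symmetric] by (simp add: norm_exp_eq_Re)
qed

lemma mult7_le:
  fixes a1 a2 a3 a4 a5 a6 a7 b1 b2 b3 b4 b5 b6 b7 :: real
  assumes "0 \<le> a1" "a1 \<le> b1" "0 \<le> a2" "a2 \<le> b2" "0 \<le> a3" "a3 \<le> b3" "0 \<le> a4" "a4 \<le> b4"
    "0 \<le> a5" "a5 \<le> b5" "0 \<le> a6" "a6 \<le> b6" "0 \<le> a7" "a7 \<le> b7"
  shows "a1 * a2 * a3 * a4 * a5 * a6 * a7 \<le> b1 * b2 * b3 * b4 * b5 * b6 * b7"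
proof -
  have mm: "\<And>x y u v::real. 0 \<le> x \<Longrightarrow> x \<le> u \<Longrightarrow> 0 \<le> y \<Longrightarrow> y \<le> v \<Longrightarrow> x * y \<le> u * v"
    by (metis mult_mono order_trans)
  have s2: "a1 * a2 \<le> b1 * b2" by (rule mm[OF assms(1-4)])
  have t2: "0 \<le> a1 * a2" by (rule mult_nonneg_nonneg[OF assms(1) assms(3)])
  have s3: "a1 * a2 * a3 \<le> b1 * b2 * b3" by (rule mm[OF t2 s2 assms(5) assms(6)])
  have t3: "0 \<le> a1 * a2 * a3" by (rule mult_nonneg_nonneg[OF t2 assms(5)])
  have s4: "a1 * a2 * a3 * a4 \<le> b1 * b2 * b3 * b4" by (rule mm[OF t3 s3 assms(7) assms(8)])
  have t4: "0 \<le> a1 * a2 * a3 * a4" by (rule mult_nonneg_nonneg[OF t3 assms(7)])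
  have s5: "a1 * a2 * a3 * a4 * a5 \<le> b1 * b2 * b3 * b4 * b5" by (rule mm[OF t4 s4 assms(9) assms(10)])
  have t5: "0 \<le> a1 * a2 * a3 * a4 * a5" by (rule mult_nonneg_nonneg[OF t4 assms(9)])
  have s6: "a1 * a2 * a3 * a4 * a5 * a6 \<le> b1 * b2 * b3 * b4 * b5 * b6" by (rule mm[OF t5 s5 assms(11) assms(12)])
  have t6: "0 \<le> a1 * a2 * a3 * a4 * a5 * a6" by (rule mult_nonneg_nonneg[OF t5 assms(11)])
  show ?thesis by (rule mm[OF t6 s6 assms(13) assms(14)])
qed
theorem mainTheorem14:
  fixes F :: "complex \<Rightarrow> complex" and a :: "nat \<Rightarrow> complex" and m :: nat
    and \<alpha> :: complex and Q :: real and k :: nat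
    and \<omega> :: "nat \<Rightarrow> real" and \<mu> :: "nat \<Rightarrow> complex" and C :: real
  assumes "selberg_sharp F a m \<alpha> Q k \<omega> \<mu>"
    and "C > 0"
  shows "\<exists>y0 K. y0 > 0 \<and> K > 0 \<and>
    (\<forall>t s n. t < 0 \<and> \<bar>t\<bar> \<le> C \<and> Im s \<ge> y0 \<and> \<bar>Re s\<bar> \<le> C * Im s powr (1/4) \<and>
       1 \<le> n \<and> real n \<le> exp (Im s powr (3/5) / \<bar>t\<bar>) \<longrightarrow>
       (\<forall>z. \<bar>Re s - Re z\<bar> \<le> Im s powr (3/5) \<and>
            Im s powr (2/3) / 2 \<le> \<bar>Im s - Im z\<bar> \<and> \<bar>Im s - Im z\<bar> \<le> 2 * Im s powr (2/3) \<longrightarrow>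
            norm (integrand \<alpha> m Q k \<omega> \<mu> t s n z)
              \<le> K * exp (- (Im s powr (4/3) / (10 * \<bar>t\<bar>)))) \<and>
       (\<forall>z. Re z = 2 \<and> \<bar>Im s - Im z\<bar> \<ge> Im s powr (2/3) \<longrightarrow>
            norm (integrand \<alpha> m Q k \<omega> \<mu> t s n z)
              \<le> K * exp (- ((Im s - Im z)\<^sup>2 / (2 * \<bar>t\<bar>)))))"
proof -
  have h: "\<alpha> \<noteq> 0" "Q > 0" "k \<ge> 1" "\<forall>i<k. \<omega> i > 0 \<and> Re (\<mu> i) \<ge> 0"
    using assms(1) unfolding selberg_sharp_def by blast+
  have C: "C > 0" by fact
  define W where "W = (\<Sum>i<k. \<omega> i)"
  define wm where "wm = Min (\<omega> ` {..<k})"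
  define M where "M = (\<Sum>i<k. norm (\<mu> i))"
  define lQ where "lQ = \<bar>ln Q\<bar>"
  define A where "A = norm \<alpha>"
  define G2 where "G2 = (\<Prod>i<k. Gamma (2 * \<omega> i + Re (\<mu> i)))"
  have ne: "{..<k} \<noteq> {}"
  proof -
    have "0 \<in> {..<k}" using h(3) by simp
    then show ?thesis by blast
  qed
  have om: "\<forall>i<k. \<omega> i > 0" using h(4) by blast
  have W: "W > 0" unfolding W_def using ne om by (intro sum_pos) auto
  have wm_in: "wm \<in> \<omega> ` {..<k}" unfolding wm_def using ne by (intro Min_in) auto
  have wm: "wm > 0" using wm_in om by auto
  have wmle: "\<forall>i<k. wm \<le> \<omega> i" unfolding wm_def by auto
  have M: "M \<ge> 0" unfolding M_def by (simp add: sum_nonneg)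
  have Mle: "\<forall>i<k. norm (\<mu> i) \<le> M" unfolding M_def
    by (auto intro!: member_le_sum)
  have Wle: "\<forall>i<k. \<omega> i \<le> W"
  proof (intro allI impI)
    fix i assume "i < k"
    then show "\<omega> i \<le> W" unfolding W_def using om
      by (intro member_le_sum) (auto intro: less_imp_le)
  qed
  have lQ: "lQ \<ge> 0" unfolding lQ_def by simp
  have A: "A > 0" unfolding A_def using h(1) by simp
  have G2: "G2 > 0" unfolding G2_def using h(4)
    by (intro prod_pos) (auto intro!: Gamma_real_pos add_pos_nonneg)
  obtain B :: real where B1: "B \<ge> 1" and
    Bb: "\<And>w::complex. 1 \<le> \<bar>Im w\<bar> \<Longrightarrow> norm (Gamma w) \<le> B * (1 + norm w) ^ nat \<lceil>Re w\<rceil>"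
    using Gamma_bound_aux by blast
  from asymp_facts[OF C W wm M lQ, of m "ln A + 2 * lQ + ln G2" "ln A" k "ln B"]
  obtain Y0 where Y0: "\<forall>y::real. y \<ge> Y0 \<longrightarrow> 1 \<le> y \<and> 1 \<le> wm * y \<and>
     4 * (C * y powr (1/4) + 2)^2 \<le> y powr (4/3) \<and>
     8 * C * (2 * m + (lQ + W * (ln (W * (C * y powr (1/4) + y)) + pi))) \<le> y powr (2/3) \<and>
     (ln A + 2 * lQ + ln G2) + 2 * m * (3 + y) + (C * y powr (1/4) + 2) * (lQ + W * (ln (W * (C * y powr (1/4) + y)) + pi))
       + C * (lQ + W * (ln (W * (C * y powr (1/4) + y)) + pi))^2 / 4 \<le> y powr (4/3) / (8 * C) \<and>
     y powr (6/5) + (C * y powr (1/4) + y powr (3/5)) * y powr (3/5) + 3/20 * y powr (4/3)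
       \<le> y powr (4/3) / 4 \<and>
     1 \<le> wm * (y - 2 * y powr (2/3)) - M \<and>
     ln A + 2 * m * ln (C * y powr (1/4) + y powr (3/5) + y + 2 * y powr (2/3) + 1)
       + lQ * (C * y powr (1/4) + y powr (3/5))
       + k * ln B + k * ((W * (C * y powr (1/4) + y powr (3/5)) + M + 1) *
            ln (1 + W * (C * y powr (1/4) + y powr (3/5) + y + 2 * y powr (2/3)) + M))
       + (y powr (3/5) + 2 * y powr (2/3)) * (lQ + W * (ln (W * (C * y powr (1/4) + y)) + pi))
       + C * (lQ + W * (ln (W * (C * y powr (1/4) + y)) + pi))^2 / 4 \<le> y powr (4/3) / (20 * C)"
    unfolding eventually_at_top_linorder by (elim exE) (rule that)
  define y0 where "y0 = max Y0 1"
  show ?thesis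
  proof (rule exI[of _ y0], rule exI[of _ "1::real"], intro conjI allI impI)
    show "y0 > 0" unfolding y0_def by simp
    show "(1::real) > 0" by simp
    fix t :: real and s :: complex and n :: nat
    assume H: "t < 0 \<and> \<bar>t\<bar> \<le> C \<and> Im s \<ge> y0 \<and> \<bar>Re s\<bar> \<le> C * Im s powr (1/4) \<and>
       1 \<le> n \<and> real n \<le> exp (Im s powr (3/5) / \<bar>t\<bar>)"
    define y where "y = Im s"
    define x where "x = Re s"
    define \<tau> where "\<tau> = \<bar>t\<bar>"
    have t: "t < 0" and tauC: "\<tau> \<le> C" and tau: "\<tau> > 0" using H by (auto simp: \<tau>_def)
    have yY0: "y \<ge> Y0" using H unfolding y_def y0_def by auto
    note F = Y0[rule_format, OF yY0]
    note Fs = F[THEN conjunct1] F[THEN conjunct2, THEN conjunct1]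
      F[THEN conjunct2, THEN conjunct2, THEN conjunct1]
      F[THEN conjunct2, THEN conjunct2, THEN conjunct2, THEN conjunct1]
      F[THEN conjunct2, THEN conjunct2, THEN conjunct2, THEN conjunct2, THEN conjunct1]
      F[THEN conjunct2, THEN conjunct2, THEN conjunct2, THEN conjunct2, THEN conjunct2, THEN conjunct1]
      F[THEN conjunct2, THEN conjunct2, THEN conjunct2, THEN conjunct2, THEN conjunct2, THEN conjunct2, THEN conjunct1]
      F[THEN conjunct2, THEN conjunct2, THEN conjunct2, THEN conjunct2, THEN conjunct2, THEN conjunct2, THEN conjunct2]
    have y1: "1 \<le> y" and ywm: "1 \<le> wm * y" using Fs(1) Fs(2) by auto
    have ypos: "y > 0" using y1 by simp
    have xb: "\<bar>x\<bar> \<le> C * y powr (1/4)" using H by (simp add: x_def y_def)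
    have n1: "1 \<le> n" using H by simp
    have nexp: "real n \<le> exp (y powr (3/5) / \<tau>)" using H unfolding y_def \<tau>_def by blast
    define Lb where "Lb = lQ + W * (ln (W * (C * y powr (1/4) + y)) + pi)"
    define L where "L = (of_real (ln Q) + (\<Sum>i<k. of_real (\<omega> i) * Ln (of_real (\<omega> i) * s)) :: complex)"
    have Lb: "norm L \<le> Lb"
    proof -
      have "1 \<le> wm * Im s" "Im s > 0" "\<bar>Re s\<bar> \<le> C * Im s powr (1/4)"
        using ywm ypos xb by (simp_all add: y_def x_def)
      from L_bound[OF h(2) om wmle this] show ?thesis
        unfolding L_def Lb_def lQ_def W_def y_def .
    qed
    have Lb0: "Lb \<ge> 0" using Lb norm_ge_zero order_trans by blast
    have EX: "norm (exp ((J_fun Q k \<omega> t s - z)\<^sup>2 / of_real \<bar>t\<bar>))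
     \<le> exp (((x - Re z)\<^sup>2 - (y - Im z)\<^sup>2) / \<tau> + norm (s - z) * Lb + \<tau> * Lb\<^sup>2 / 4)" for z
      using exp_bound[OF t L_def Lb, of z] unfolding x_def y_def \<tau>_def .
    have decomp: "norm (integrand \<alpha> m Q k \<omega> \<mu> t s n z) =
      A * norm z ^ m * norm (z - 1) ^ m * Q powr Re z *
      (\<Prod>i<k. norm (Gamma (complex_of_real (\<omega> i) * z + \<mu> i))) *
      norm (exp ((J_fun Q k \<omega> t s - z)\<^sup>2 / of_real \<bar>t\<bar>)) * real n powr (- Re z)" for z
    proof -
      have q: "norm ((complex_of_real Q) powr z) = Q powr Re z"
        using h(2) by (subst norm_powr_real_powr) auto
      have nn: "norm ((of_nat n :: complex) powr (- z)) = real n powr (- Re z)"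
        by (subst norm_powr_real_powr) auto
      show ?thesis
        unfolding integrand_def gamma_factor_def
        by (simp add: norm_mult norm_power q nn A_def prod_norm[symmetric])
    qed
    have p23: "(y powr (2/3))\<^sup>2 = y powr (4/3)"
      by (simp add: power2_eq_square powr_add[symmetric])
    have p35: "(y powr (3/5))\<^sup>2 = y powr (6/5)"
      by (simp add: power2_eq_square powr_add[symmetric])
    show "norm (integrand \<alpha> m Q k \<omega> \<mu> t s n z) \<le> 1 * exp (- (Im s powr (4/3) / (10 * \<bar>t\<bar>)))"
      if Z: "\<bar>Re s - Re z\<bar> \<le> Im s powr (3/5) \<and>
            Im s powr (2/3) / 2 \<le> \<bar>Im s - Im z\<bar> \<and> \<bar>Im s - Im z\<bar> \<le> 2 * Im s powr (2/3)" for z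
    proof -
      define R where "R = C * y powr (1/4) + y powr (3/5)"
      define Zb where "Zb = R + y + 2 * y powr (2/3)"
      define Gy where "Gy = (W * R + M + 1) * ln (1 + W * Zb + M)"
      have z1: "\<bar>x - Re z\<bar> \<le> y powr (3/5)" and z2: "y powr (2/3) / 2 \<le> \<bar>y - Im z\<bar>"
        and z3: "\<bar>y - Im z\<bar> \<le> 2 * y powr (2/3)" using Z by (auto simp: x_def y_def)
      have Rez: "\<bar>Re z\<bar> \<le> R" unfolding R_def using z1 xb by arith
      have Imz: "\<bar>Im z\<bar> \<le> y + 2 * y powr (2/3)" using z3 ypos by arith
      have Imz2: "Im z \<ge> y - 2 * y powr (2/3)" using z3 by arith
      have ygt: "y - 2 * y powr (2/3) \<ge> 0"
      proof -
        have "0 \<le> wm * (y - 2 * y powr (2/3))" using Fs(7) M by linarith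
        then show ?thesis using wm by (auto simp: zero_le_mult_iff)
      qed
      have nz: "norm z \<le> Zb" unfolding Zb_def using cmod_le[of z] Rez Imz by linarith
      have R0: "R \<ge> 0" unfolding R_def using C by simp
      have Zb0: "Zb \<ge> 0" unfolding Zb_def using R0 ypos by simp
      have f1: "A \<le> exp (ln A)" using A by simp
      have f2: "norm z ^ m \<le> exp (m * ln (Zb + 1))"
      proof -
        have "norm z ^ m \<le> (Zb + 1) ^ m" using nz by (intro power_mono) auto
        also have "\<dots> = exp (m * ln (Zb + 1))" using Zb0 by (simp add: exp_of_nat_mult)
        finally show ?thesis .
      qed
      have f3: "norm (z - 1) ^ m \<le> exp (m * ln (Zb + 1))"
      proof -
        have "norm (z - 1) \<le> norm z + 1" using norm_triangle_ineq4[of z 1] by simp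
        then have "norm (z - 1) ^ m \<le> (Zb + 1) ^ m" using nz by (intro power_mono) auto
        also have "\<dots> = exp (m * ln (Zb + 1))" using Zb0 by (simp add: exp_of_nat_mult)
        finally show ?thesis .
      qed
      have f4: "Q powr Re z \<le> exp (lQ * R)"
      proof -
        have "Q powr Re z = exp (Re z * ln Q)" using h(2) by (simp add: powr_def)
        also have "Re z * ln Q \<le> lQ * R"
        proof -
          have "Re z * ln Q \<le> \<bar>Re z\<bar> * \<bar>ln Q\<bar>" by (metis abs_ge_self abs_mult)
          also have "\<dots> \<le> R * lQ" unfolding lQ_def using Rez by (intro mult_right_mono) auto
          finally show ?thesis by (simp add: mult.commute)
        qed
        finally show ?thesis by simp
      qed
      have f5: "(\<Prod>i<k. norm (Gamma (complex_of_real (\<omega> i) * z + \<mu> i))) \<le> exp (k * ln B + k * Gy)"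
      proof -
        have per: "norm (Gamma (complex_of_real (\<omega> i) * z + \<mu> i)) \<le> B * exp Gy" if i: "i < k" for i
        proof -
          define w where "w = complex_of_real (\<omega> i) * z + \<mu> i"
          have wi: "\<omega> i > 0" "wm \<le> \<omega> i" "\<omega> i \<le> W" "norm (\<mu> i) \<le> M"
            using om wmle Wle Mle i by auto
          have "Im w = \<omega> i * Im z + Im (\<mu> i)" by (simp add: w_def)
          moreover have "\<omega> i * Im z \<ge> wm * (y - 2 * y powr (2/3))"
          proof -
            have "wm * (y - 2 * y powr (2/3)) \<le> \<omega> i * (y - 2 * y powr (2/3))"
              using wi ygt by (intro mult_right_mono) auto
            also have "\<dots> \<le> \<omega> i * Im z" using wi Imz2 by (intro mult_left_mono) auto
            finally show ?thesis .
          qed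
          moreover have "\<bar>Im (\<mu> i)\<bar> \<le> M" using abs_Im_le_cmod[of "\<mu> i"] wi by linarith
          ultimately have Imw: "1 \<le> \<bar>Im w\<bar>" using Fs(7) by linarith
          have Rew: "\<bar>Re w\<bar> \<le> W * R + M"
          proof -
            have "Re w = \<omega> i * Re z + Re (\<mu> i)" by (simp add: w_def)
            moreover have "\<bar>\<omega> i * Re z\<bar> \<le> W * R"
            proof -
              have "\<bar>\<omega> i * Re z\<bar> = \<omega> i * \<bar>Re z\<bar>" using wi by (simp add: abs_mult)
              also have "\<dots> \<le> W * R" using wi Rez R0 by (intro mult_mono) auto
              finally show ?thesis .
            qed
            moreover have "\<bar>Re (\<mu> i)\<bar> \<le> M" using abs_Re_le_cmod[of "\<mu> i"] wi by linarith
            ultimately show ?thesis by linarith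
          qed
          have nw: "norm w \<le> W * Zb + M"
          proof -
            have "norm w \<le> norm (complex_of_real (\<omega> i) * z) + norm (\<mu> i)"
              unfolding w_def by (rule norm_triangle_ineq)
            also have "norm (complex_of_real (\<omega> i) * z) = \<omega> i * norm z" using wi by (simp add: norm_mult)
            also have "\<omega> i * norm z \<le> W * Zb" using wi nz Zb0 by (intro mult_mono) auto
            finally show ?thesis using wi by linarith
          qed
          define N where "N = nat \<lceil>Re w\<rceil>"
          have N: "real N \<le> W * R + M + 1" unfolding N_def using Rew by linarith
          have lg0: "0 \<le> ln (1 + W * Zb + M)" using W Zb0 M by simp
          have "norm (Gamma w) \<le> B * (1 + norm w) ^ N" unfolding N_def using Bb[OF Imw] .
          also have "(1 + norm w) ^ N \<le> (1 + W * Zb + M) ^ N" using nw by (intro power_mono) auto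
          also have "(1 + W * Zb + M) ^ N = exp (N * ln (1 + W * Zb + M))"
          proof -
            have "0 < 1 + W * Zb + M" using W Zb0 M by (simp add: add_pos_nonneg)
            then show ?thesis by (simp add: exp_of_nat_mult)
          qed
          also have "\<dots> \<le> exp Gy" unfolding Gy_def using N lg0 by (simp add: mult_right_mono)
          finally show ?thesis unfolding w_def using B1 by (simp add: mult_left_mono)
        qed
        have "(\<Prod>i<k. norm (Gamma (complex_of_real (\<omega> i) * z + \<mu> i))) \<le> (\<Prod>i<k. B * exp Gy)"
          by (intro prod_mono) (use per in auto)
        also have "\<dots> = (B * exp Gy) ^ k" by simp
        also have "\<dots> = exp (k * ln B + k * Gy)" using B1
          by (simp add: exp_add exp_of_nat_mult power_mult_distrib)
        finally show ?thesis .
      qed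
      have f6: "norm (exp ((J_fun Q k \<omega> t s - z)\<^sup>2 / of_real \<bar>t\<bar>))
          \<le> exp (((x - Re z)\<^sup>2 - (y - Im z)\<^sup>2) / \<tau> + (y powr (3/5) + 2 * y powr (2/3)) * Lb + C * Lb\<^sup>2 / 4)"
      proof -
        have c: "norm (s - z) \<le> \<bar>x - Re z\<bar> + \<bar>y - Im z\<bar>" using cmod_le[of "s - z"] by (simp add: x_def y_def)
        have "norm (s - z) \<le> y powr (3/5) + 2 * y powr (2/3)" using c z1 z3 by linarith
        then have "norm (s - z) * Lb \<le> (y powr (3/5) + 2 * y powr (2/3)) * Lb" using Lb0 by (simp add: mult_right_mono)
        moreover have "\<tau> * Lb\<^sup>2 / 4 \<le> C * Lb\<^sup>2 / 4" using tauC by (simp add: mult_right_mono)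
        ultimately have "((x - Re z)\<^sup>2 - (y - Im z)\<^sup>2) / \<tau> + norm (s - z) * Lb + \<tau> * Lb\<^sup>2 / 4
          \<le> ((x - Re z)\<^sup>2 - (y - Im z)\<^sup>2) / \<tau> + (y powr (3/5) + 2 * y powr (2/3)) * Lb + C * Lb\<^sup>2 / 4"
          by linarith
        then show ?thesis using EX[of z] by (meson exp_le_cancel_iff order_trans)
      qed
      have f7: "real n powr (- Re z) \<le> exp (R * y powr (3/5) / \<tau>)"
      proof -
        have ln0: "0 \<le> ln (real n)" using n1 by simp
        have "ln (real n) \<le> ln (exp (y powr (3/5) / \<tau>))" using nexp n1 by (subst ln_le_cancel_iff) auto
        then have lnn: "ln (real n) \<le> y powr (3/5) / \<tau>" by simp
        have "real n powr (- Re z) = exp (- Re z * ln (real n))" using n1 by (simp add: powr_def)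
        also have "- Re z * ln (real n) \<le> R * (y powr (3/5) / \<tau>)"
        proof -
          have "- Re z \<le> \<bar>Re z\<bar>" by simp
          then have "- Re z * ln (real n) \<le> \<bar>Re z\<bar> * ln (real n)" using ln0 by (rule mult_right_mono)
          also have "\<dots> \<le> R * (y powr (3/5) / \<tau>)" using Rez lnn ln0 R0 by (intro mult_mono) auto
          finally show ?thesis .
        qed
        finally show ?thesis by simp
      qed
      have "norm (integrand \<alpha> m Q k \<omega> \<mu> t s n z) \<le>
        exp (ln A) * exp (m * ln (Zb + 1)) * exp (m * ln (Zb + 1)) * exp (lQ * R) * exp (k * ln B + k * Gy) *
        exp (((x - Re z)\<^sup>2 - (y - Im z)\<^sup>2) / \<tau> + (y powr (3/5) + 2 * y powr (2/3)) * Lb + C * Lb\<^sup>2 / 4) *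
        exp (R * y powr (3/5) / \<tau>)"
        unfolding decomp using A f1 f2 f3 f4 f5 f6 f7
        by (intro mult7_le) (auto intro!: prod_nonneg)
      also have "\<dots> = exp (ln A + m * ln (Zb + 1) + m * ln (Zb + 1) + lQ * R + (k * ln B + k * Gy) +
        (((x - Re z)\<^sup>2 - (y - Im z)\<^sup>2) / \<tau> + (y powr (3/5) + 2 * y powr (2/3)) * Lb + C * Lb\<^sup>2 / 4) +
        R * y powr (3/5) / \<tau>)" by (simp only: exp_add)
      also have "\<dots> \<le> exp (- (y powr (4/3) / (10 * \<tau>)))"
      proof -
        have F6: "y powr (6/5) + R * y powr (3/5) + 3/20 * y powr (4/3) \<le> y powr (4/3) / 4"
          unfolding R_def by (rule Fs(6))
        have F8: "ln A + 2 * m * ln (Zb + 1) + lQ * R + k * ln B + k * Gy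
          + (y powr (3/5) + 2 * y powr (2/3)) * Lb + C * Lb\<^sup>2 / 4 \<le> y powr (4/3) / (20 * C)"
          unfolding R_def Zb_def Gy_def Lb_def by (rule Fs(8))
        have "\<bar>x - Re z\<bar>\<^sup>2 \<le> (y powr (3/5))\<^sup>2" using z1 by (intro power_mono) auto
        then have a1: "(x - Re z)\<^sup>2 \<le> y powr (6/5)" using p35 by simp
        have a2: "y powr (4/3) / 4 \<le> (y - Im z)\<^sup>2"
        proof -
          have "(y powr (2/3) / 2)\<^sup>2 \<le> \<bar>y - Im z\<bar>\<^sup>2" using z2 by (intro power_mono) auto
          then have "(y powr (2/3) / 2)\<^sup>2 \<le> (y - Im z)\<^sup>2" by simp
          then show ?thesis using p23 by (simp add: power_divide)
        qed
        have a3: "((x - Re z)\<^sup>2 - (y - Im z)\<^sup>2) / \<tau> + R * y powr (3/5) / \<tau> + y powr (4/3) / (10 * \<tau>)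
            = ((x - Re z)\<^sup>2 - (y - Im z)\<^sup>2 + R * y powr (3/5) + y powr (4/3) / 10) / \<tau>"
          using tau by (simp add: field_simps)
        have a4: "(x - Re z)\<^sup>2 - (y - Im z)\<^sup>2 + R * y powr (3/5) + y powr (4/3) / 10 \<le> - (y powr (4/3) / 20)"
          using a1 a2 F6 by linarith
        have a5: "((x - Re z)\<^sup>2 - (y - Im z)\<^sup>2 + R * y powr (3/5) + y powr (4/3) / 10) / \<tau> \<le> - (y powr (4/3) / 20) / \<tau>"
          by (rule divide_right_mono[OF a4]) (use tau in simp)
        have a6: "- (y powr (4/3) / 20) / \<tau> \<le> - (y powr (4/3) / (20 * C))"
        proof -
          have "y powr (4/3) / (20 * C) \<le> y powr (4/3) / (20 * \<tau>)"
            using tau tauC by (intro divide_left_mono) auto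
          then show ?thesis by (simp add: field_simps)
        qed
        have e2: "real (2 * m) * ln (Zb + 1) = real m * ln (Zb + 1) + real m * ln (Zb + 1)" by simp
        show ?thesis unfolding exp_le_cancel_iff using a3 a5 a6 F8 e2 by linarith
      qed
      finally show ?thesis by (simp add: y_def \<tau>_def)
    qed
    show "norm (integrand \<alpha> m Q k \<omega> \<mu> t s n z) \<le> 1 * exp (- ((Im s - Im z)\<^sup>2 / (2 * \<bar>t\<bar>)))"
      if Z: "Re z = 2 \<and> \<bar>Im s - Im z\<bar> \<ge> Im s powr (2/3)" for z
    proof -
      define d where "d = \<bar>y - Im z\<bar>"
      have Rez: "Re z = 2" and dge: "y powr (2/3) \<le> d" using Z by (auto simp: d_def y_def)
      have d0: "d \<ge> 0" unfolding d_def by simp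
      have Imz: "\<bar>Im z\<bar> \<le> y + d" unfolding d_def using ypos by arith
      have ee: "\<And>r::real. 0 \<le> r \<Longrightarrow> r ^ m \<le> exp (m * r)"
      proof -
        fix r :: real assume "0 \<le> r"
        have "r \<le> exp r" using exp_ge_add_one_self[of r] by linarith
        then have "r ^ m \<le> exp r ^ m" using \<open>0 \<le> r\<close> by (intro power_mono) auto
        then show "r ^ m \<le> exp (m * r)" by (simp add: exp_of_nat_mult)
      qed
      have f1: "A \<le> exp (ln A)" using A by simp
      have f2: "norm z ^ m \<le> exp (m * (3 + y + d))"
      proof -
        have "norm z \<le> 2 + \<bar>Im z\<bar>" using cmod_le[of z] Rez by simp
        then have "norm z \<le> 3 + y + d" using Imz by linarith
        then have "norm z ^ m \<le> (3 + y + d) ^ m" by (intro power_mono) auto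
        also have "\<dots> \<le> exp (m * (3 + y + d))" using ypos d0 by (intro ee) auto
        finally show ?thesis .
      qed
      have f3: "norm (z - 1) ^ m \<le> exp (m * (3 + y + d))"
      proof -
        have "norm (z - 1) \<le> 1 + \<bar>Im z\<bar>" using cmod_le[of "z - 1"] Rez by simp
        then have "norm (z - 1) \<le> 3 + y + d" using Imz by linarith
        then have "norm (z - 1) ^ m \<le> (3 + y + d) ^ m" by (intro power_mono) auto
        also have "\<dots> \<le> exp (m * (3 + y + d))" using ypos d0 by (intro ee) auto
        finally show ?thesis .
      qed
      have f4: "Q powr Re z \<le> exp (2 * lQ)"
        using h(2) unfolding Rez lQ_def by (simp add: powr_def)
      have f5: "(\<Prod>i<k. norm (Gamma (complex_of_real (\<omega> i) * z + \<mu> i))) \<le> exp (ln G2)"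
      proof -
        have "(\<Prod>i<k. norm (Gamma (complex_of_real (\<omega> i) * z + \<mu> i))) \<le> G2"
          unfolding G2_def
        proof (intro prod_mono conjI norm_ge_zero)
          fix i assume "i \<in> {..<k}"
          then have wi: "\<omega> i > 0" "Re (\<mu> i) \<ge> 0" using h(4) by auto
          have "Re (complex_of_real (\<omega> i) * z + \<mu> i) = 2 * \<omega> i + Re (\<mu> i)" using Rez by simp
          moreover have "Re (complex_of_real (\<omega> i) * z + \<mu> i) > 0" using Rez wi by simp
          ultimately show "norm (Gamma (complex_of_real (\<omega> i) * z + \<mu> i)) \<le> Gamma (2 * \<omega> i + Re (\<mu> i))"
            using Gamma_norm_le_Re by metis
        qed
        then show ?thesis using G2 by simp
      qed
      have f6: "norm (exp ((J_fun Q k \<omega> t s - z)\<^sup>2 / of_real \<bar>t\<bar>))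
          \<le> exp (((x - 2)\<^sup>2 - d\<^sup>2) / \<tau> + (C * y powr (1/4) + 2 + d) * Lb + C * Lb\<^sup>2 / 4)"
      proof -
        have c: "norm (s - z) \<le> \<bar>x - 2\<bar> + d" using cmod_le[of "s - z"] Rez by (simp add: x_def y_def d_def)
        have "\<bar>x - 2\<bar> \<le> C * y powr (1/4) + 2" using xb by arith
        then have "norm (s - z) \<le> C * y powr (1/4) + 2 + d" using c by linarith
        then have "norm (s - z) * Lb \<le> (C * y powr (1/4) + 2 + d) * Lb" using Lb0 by (simp add: mult_right_mono)
        moreover have "\<tau> * Lb\<^sup>2 / 4 \<le> C * Lb\<^sup>2 / 4" using tauC by (simp add: mult_right_mono)
        moreover have eq1: "(y - Im z)\<^sup>2 = d\<^sup>2" unfolding d_def by simp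
        moreover have eq2: "(x - Re z)\<^sup>2 = (x - 2)\<^sup>2" using Rez by simp
        ultimately have "((x - Re z)\<^sup>2 - (y - Im z)\<^sup>2) / \<tau> + norm (s - z) * Lb + \<tau> * Lb\<^sup>2 / 4
          \<le> ((x - 2)\<^sup>2 - d\<^sup>2) / \<tau> + (C * y powr (1/4) + 2 + d) * Lb + C * Lb\<^sup>2 / 4"
          unfolding eq1 eq2 by linarith
        then show ?thesis using EX[of z] by (meson exp_le_cancel_iff order_trans)
      qed
      have f7: "real n powr (- Re z) \<le> exp 0"
      proof -
        have "1 \<le> real n powr 2" using n1 by (simp add: ge_one_powr_ge_zero)
        moreover have "real n powr (- Re z) = inverse (real n powr 2)" using Rez by (simp add: powr_minus)
        ultimately show ?thesis by (simp add: inverse_le_1_iff)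
      qed
      have "norm (integrand \<alpha> m Q k \<omega> \<mu> t s n z) \<le>
        exp (ln A) * exp (m * (3 + y + d)) * exp (m * (3 + y + d)) * exp (2 * lQ) * exp (ln G2) *
        exp (((x - 2)\<^sup>2 - d\<^sup>2) / \<tau> + (C * y powr (1/4) + 2 + d) * Lb + C * Lb\<^sup>2 / 4) * exp 0"
        unfolding decomp using A f1 f2 f3 f4 f5 f6 f7
        by (intro mult7_le) (auto intro!: prod_nonneg)
      also have "\<dots> = exp (ln A + m * (3 + y + d) + m * (3 + y + d) + 2 * lQ + ln G2 +
        (((x - 2)\<^sup>2 - d\<^sup>2) / \<tau> + (C * y powr (1/4) + 2 + d) * Lb + C * Lb\<^sup>2 / 4) + 0)"
        by (simp only: exp_add)
      also have "\<dots> \<le> exp (- (d\<^sup>2 / (2 * \<tau>)))"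
      proof -
        define u where "u = C * y powr (1/4) + 2"
        have u0: "u \<ge> 0" unfolding u_def using C by simp
        have F3: "4 * u\<^sup>2 \<le> y powr (4/3)" unfolding u_def by (rule Fs(3))
        have F4: "8 * C * (2 * m + Lb) \<le> y powr (2/3)" unfolding Lb_def by (rule Fs(4))
        have F5: "(ln A + 2 * lQ + ln G2) + 2 * m * (3 + y) + u * Lb + C * Lb\<^sup>2 / 4 \<le> y powr (4/3) / (8 * C)"
          unfolding u_def Lb_def by (rule Fs(5))
        have "(y powr (2/3))\<^sup>2 \<le> d\<^sup>2" using dge by (intro power_mono) auto
        then have dd: "y powr (4/3) \<le> d\<^sup>2" using p23 by simp
        have x2: "(x - 2)\<^sup>2 \<le> u\<^sup>2"
        proof -
          have "\<bar>x - 2\<bar> \<le> u" unfolding u_def using xb by arith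
          then have "\<bar>x - 2\<bar>\<^sup>2 \<le> u\<^sup>2" by (intro power_mono) auto
          then show ?thesis by simp
        qed
        have b1: "((x - 2)\<^sup>2 - d\<^sup>2) / \<tau> + d\<^sup>2 / (2 * \<tau>) \<le> - (d\<^sup>2 / (4 * C))"
        proof -
          have "((x - 2)\<^sup>2 - d\<^sup>2) / \<tau> + d\<^sup>2 / (2 * \<tau>) = ((x - 2)\<^sup>2 - d\<^sup>2 / 2) / \<tau>"
            using tau by (simp add: field_simps)
          also have "\<dots> \<le> (- (d\<^sup>2 / 4)) / \<tau>"
            using x2 F3 dd tau by (intro divide_right_mono) auto
          also have "\<dots> \<le> - (d\<^sup>2 / (4 * C))"
          proof -
            have "d\<^sup>2 / (4 * C) \<le> d\<^sup>2 / (4 * \<tau>)"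
              using tau tauC by (intro divide_left_mono) auto
            then show ?thesis by (simp add: field_simps)
          qed
          finally show ?thesis .
        qed
        have b2: "d * (2 * m + Lb) \<le> d\<^sup>2 / (8 * C)"
        proof -
          have "2 * m + Lb \<le> d / (8 * C)" using F4 dge C by (simp add: field_simps)
          then have "d * (2 * m + Lb) \<le> d * (d / (8 * C))" using d0 by (intro mult_left_mono) auto
          then show ?thesis by (simp add: power2_eq_square)
        qed
        have b3: "y powr (4/3) / (8 * C) \<le> d\<^sup>2 / (8 * C)" using dd C by (intro divide_right_mono) auto
        have "ln A + m * (3 + y + d) + m * (3 + y + d) + 2 * lQ + ln G2 +
          (((x - 2)\<^sup>2 - d\<^sup>2) / \<tau> + (C * y powr (1/4) + 2 + d) * Lb + C * Lb\<^sup>2 / 4) + 0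
          = ((ln A + 2 * lQ + ln G2) + 2 * m * (3 + y) + u * Lb + C * Lb\<^sup>2 / 4) + d * (2 * m + Lb)
            + ((x - 2)\<^sup>2 - d\<^sup>2) / \<tau>"
          unfolding u_def by (simp add: algebra_simps)
        also have "\<dots> \<le> - (d\<^sup>2 / (2 * \<tau>))"
        proof -
          have "d\<^sup>2 / (8 * C) + d\<^sup>2 / (8 * C) = d\<^sup>2 / (4 * C)" by (simp add: field_simps)
          then show ?thesis using F5 b1 b2 b3 by linarith
        qed
        finally show ?thesis by simp
      qed
      finally show ?thesis by (simp add: d_def y_def \<tau>_def power2_abs)
    qed
  qed
qed

end
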